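(* Let $c_1,\dots,c_k\in(1,\infty)$, let $\lambda\in(0,\infty)^k$ satisfy $\lambda_j/(2g'(\|Y-X\hat\beta^\lambda\|_2^2))=c_j\|(XP_jM_j^{+})^\top\varepsilon\|_{q_j}^*$ for all $j$, and set $a_j:=2(c_j-1)\|(XP_jM_j^{+})^\top\varepsilon\|_{q_j}^*$ for $j=1,\dots,k$. For $a=(a_1,\dots,a_k)$ define $L_a(\beta):=\frac1n\|X(\beta^*-\beta)\|_2^2+\frac1n\sum_{j=1}^ka_j\|M_j\beta\|_{q_j}$. Then, with probability one, $$L_a(\hat\beta^\lambda)\le\Big(1+\max_{j\in\{1,\dots,k\}}\frac{4\|(XP_jM_j^{+})^\top\varepsilon\|_{q_j}^*}{a_j}\Big)\min_{\beta\in\mathbb{R}^p}L_a(\beta).$$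
   Context: Standing setup. Model: $Y=X\beta^*+\varepsilon$ with $Y\in\mathbb{R}^n$, $X\in\mathbb{R}^{n\times p}$, $\beta^*\in\mathbb{R}^p$, $\varepsilon\in\mathbb{R}^n$ (random). Link function $g:\mathbb{R}\to[0,\infty)$ with $g(0)=0$, $g$ continuous and strictly increasing on $[0,\infty)$, continuously differentiable on $(0,\infty)$ with strictly positive and non-increasing derivative $g'$, and such that $\alpha\mapsto g(\|\alpha\|_2^2)$ is strictly convex on $\mathbb{R}^n$. Penalty: $k\ge1$, matrices $M_1,\dots,M_k\in\mathbb{R}^{p\times p}$ with $\bigcap_{j=1}^k\mathrm{Ker}(M_j)=\{0\}$, exponents $q_j\ge1$, $\|\cdot\|_{q_j}$ the $\ell_{q_j}$-norm on $\mathbb{R}^p$, and $\|\cdot\|_{q_j}^*$ its dual norm. For $\lambda\in(0,\infty)^k$, $\hat\beta^\lambda$ denotes any element of $\arg\min_{\beta\in\mathbb{R}^p}\{g(\|Y-X\beta\|_2^2)+\sum_{j=1}^k\lambda_j\|M_j\beta\|_{q_j}\}$. $A^+$ denotes the Moore–Penrose pseudoinverse; $P_1,\dots,P_k\in\mathbb{R}^{p\times p}$ are fixed projection matrices with $\sum_{j=1}^kP_jM_j^+M_j=I_{p\times p}$. Noise assumption: with probability one, $Y\neq0$ and $\min_{j}\|(XP_jM_j^{+})^\top\varepsilon\|_{q_j}^*>0$. *)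

theory Defs
  imports "HOL-Probability.Probability"
begin

definition lq_norm :: "real \<Rightarrow> real^'p \<Rightarrow> real" where
  "lq_norm q x = (\<Sum>i\<in>UNIV. \<bar>x $ i\<bar> powr q) powr (1 / q)"

definition lq_dual_norm :: "real \<Rightarrow> real^'p \<Rightarrow> real" where
  "lq_dual_norm q z = Sup {inner z x | x. lq_norm q x \<le> 1}"

definition mp_pinv :: "real^'m^'n \<Rightarrow> real^'n^'m" where
  "mp_pinv A = (THE B. A ** B ** A = A \<and> B ** A ** B = B \<and>
      transpose (A ** B) = A ** B \<and> transpose (B ** A) = B ** A)"

definition strictly_convex :: "('a::real_vector \<Rightarrow> real) \<Rightarrow> bool" where
  "strictly_convex f \<longleftrightarrow> (\<forall>x y t. x \<noteq> y \<and> 0 < t \<and> t < 1 \<longrightarrow>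
      f ((1 - t) *\<^sub>R x + t *\<^sub>R y) < (1 - t) * f x + t * f y)"

definition pen_obj ::
  "(real \<Rightarrow> real) \<Rightarrow> real^'p^'n \<Rightarrow> real^'n \<Rightarrow> ('k::finite \<Rightarrow> real^'p^'p)
     \<Rightarrow> ('k \<Rightarrow> real) \<Rightarrow> ('k \<Rightarrow> real) \<Rightarrow> real^'p \<Rightarrow> real" where
  "pen_obj g X Y M q lam b =
     g ((norm (Y - X *v b))\<^sup>2) + (\<Sum>j\<in>UNIV. lam j * lq_norm (q j) (M j *v b))"

definition loss_L ::
  "real^'p^'n \<Rightarrow> real^'p \<Rightarrow> ('k::finite \<Rightarrow> real^'p^'p) \<Rightarrow> ('k \<Rightarrow> real)
     \<Rightarrow> ('k \<Rightarrow> real) \<Rightarrow> real^'p \<Rightarrow> real" where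
  "loss_L X bstar M q a b =
     (1 / real CARD('n)) * (norm (X *v (bstar - b)))\<^sup>2
     + (1 / real CARD('n)) * (\<Sum>j\<in>UNIV. a j * lq_norm (q j) (M j *v b))"

end

theory Submission
  imports Defs
begin


lemma inner_tr: fixes A :: "real^'m^'n"
  shows "inner e (A *v w) = inner (transpose A *v e) w"
proof -
  have "inner e (A *v w) = (\<Sum>i\<in>UNIV. \<Sum>j\<in>UNIV. e$i * (A$i$j * w$j))"
    by (simp add: inner_vec_def matrix_vector_mult_def sum_distrib_left)
  also have "\<dots> = (\<Sum>j\<in>UNIV. \<Sum>i\<in>UNIV. e$i * (A$i$j * w$j))"
    by (rule sum.swap)
  also have "\<dots> = inner (transpose A *v e) w"
    by (simp add: inner_vec_def matrix_vector_mult_def transpose_def sum_distrib_left mult_ac)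
  finally show ?thesis .
qed

lemma lq_norm_nonneg: "0 \<le> lq_norm q x"
  unfolding lq_norm_def by simp

lemma lq_comp_le: assumes "q \<ge> 1" shows "\<bar>x$i\<bar> \<le> lq_norm q x"
proof -
  have "\<bar>x$i\<bar> powr q \<le> (\<Sum>i\<in>UNIV. \<bar>x$i\<bar> powr q)"
    by (rule member_le_sum) auto
  then have "(\<bar>x$i\<bar> powr q) powr (1/q) \<le> (\<Sum>i\<in>UNIV. \<bar>x$i\<bar> powr q) powr (1/q)"
    by (rule powr_mono2[rotated 2]) (use assms in auto)
  moreover have "(\<bar>x$i\<bar> powr q) powr (1/q) = \<bar>x$i\<bar>" using assms by (simp add: powr_powr)
  ultimately show ?thesis by (simp add: lq_norm_def)
qed

lemma lq_norm_zero: assumes "q \<ge> 1" "lq_norm q x = 0" shows "x = 0"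
  using lq_comp_le[OF assms(1), of x] assms(2) by (simp add: vec_eq_iff)

lemma lq_norm_scale: assumes "q \<ge> 1" shows "lq_norm q (t *\<^sub>R x) = \<bar>t\<bar> * lq_norm q x"
proof -
  have "(\<Sum>i\<in>UNIV. \<bar>(t *\<^sub>R x)$i\<bar> powr q) = \<bar>t\<bar> powr q * (\<Sum>i\<in>UNIV. \<bar>x$i\<bar> powr q)"
    by (simp add: abs_mult powr_mult sum_distrib_left)
  then have "lq_norm q (t *\<^sub>R x) = (\<bar>t\<bar> powr q) powr (1/q) * (\<Sum>i\<in>UNIV. \<bar>x$i\<bar> powr q) powr (1/q)"
    by (simp add: lq_norm_def powr_mult)
  also have "(\<bar>t\<bar> powr q) powr (1/q) = \<bar>t\<bar>" using assms by (simp add: powr_powr)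
  finally show ?thesis by (simp add: lq_norm_def)
qed

lemma lq_norm_uminus: "lq_norm q (-x) = lq_norm q x"
  by (simp add: lq_norm_def)

lemma dual_bdd: assumes "q \<ge> 1" shows "bdd_above {inner z x | x. lq_norm q x \<le> 1}"
proof (rule bdd_aboveI)
  fix y assume "y \<in> {inner z x | x. lq_norm q x \<le> 1}"
  then obtain x where y: "y = inner z x" and x: "lq_norm q x \<le> 1" by auto
  have "y = (\<Sum>i\<in>UNIV. z$i * x$i)" by (simp add: y inner_vec_def)
  also have "\<dots> \<le> (\<Sum>i\<in>UNIV. \<bar>z$i\<bar>)"
  proof (rule sum_mono)
    fix i
    have "\<bar>x$i\<bar> \<le> 1" using lq_comp_le[OF assms, of x i] x by linarith
    then have "\<bar>z$i\<bar> * \<bar>x$i\<bar> \<le> \<bar>z$i\<bar>" by (intro mult_left_le) auto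
    moreover have "z$i * x$i \<le> \<bar>z$i\<bar> * \<bar>x$i\<bar>" by (metis abs_ge_self abs_mult)
    ultimately show "z$i * x$i \<le> \<bar>z$i\<bar>" by linarith
  qed
  finally show "y \<le> (\<Sum>i\<in>UNIV. \<bar>z$i\<bar>)" .
qed

lemma dual_ineq: assumes "q \<ge> 1" shows "inner z x \<le> lq_dual_norm q z * lq_norm q x"
proof (cases "lq_norm q x = 0")
  case True then show ?thesis using lq_norm_zero[OF assms True] by simp
next
  case False
  define s where "s = lq_norm q x"
  have s: "s > 0" using False lq_norm_nonneg[of q x] by (simp add: s_def)
  define x' where "x' = (1/s) *\<^sub>R x"
  have "lq_norm q x' = 1" using s by (simp add: x'_def lq_norm_scale[OF assms] s_def)
  then have "inner z x' \<le> lq_dual_norm q z" unfolding lq_dual_norm_def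
    by (intro cSup_upper dual_bdd assms) auto
  moreover have "inner z x = s * inner z x'" using s by (simp add: x'_def)
  ultimately show ?thesis using s by (simp add: s_def mult.commute mult_left_mono)
qed

lemma tangent:
  fixes g g' :: "real \<Rightarrow> real"
  assumes g_cont: "continuous_on {0..} g"
    and g_deriv: "\<And>x. x > 0 \<Longrightarrow> (g has_real_derivative g' x) (at x)"
    and g'_antimono: "\<And>x y. 0 < x \<Longrightarrow> x \<le> y \<Longrightarrow> g' y \<le> g' x"
    and r: "r > 0" and x: "x \<ge> 0"
  shows "g x \<le> g r + g' r * (x - r)"
proof -
  consider "x > r" | "x = r" | "x < r" by linarith
  then show ?thesis
  proof cases
    case 1
    obtain z where z: "z > r" "z < x" "g x - g r = (x - r) * g' z"
      using MVT2[of r x g g'] 1 r g_deriv by auto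
    have "g' z \<le> g' r" using g'_antimono r z by auto
    then have "g' z * (x - r) \<le> g' r * (x - r)" using 1 by (intro mult_right_mono) auto
    moreover have "g x - g r = g' z * (x - r)" using z by (simp add: mult.commute)
    ultimately show ?thesis by linarith
  next
    case 2 then show ?thesis by simp
  next
    case 3
    have cont: "continuous_on {x..r} g" by (rule continuous_on_subset[OF g_cont]) (use x in auto)
    obtain z where z: "x < z" "z < r" "g r - g x = g' z * (r - x)"
    proof (rule mvt[OF 3 cont, of "\<lambda>z h. g' z * h"])
      fix z assume "x < z" "z < r"
      then show "(g has_derivative (\<lambda>h. g' z * h)) (at z)"
        using g_deriv[of z] x by (simp add: has_field_derivative_def mult_commute_abs)
    qed auto
    have "g' r \<le> g' z" using g'_antimono z x by auto
    then have "g' r * (r - x) \<le> g' z * (r - x)" using 3 by (intro mult_right_mono) auto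
    then show ?thesis using z(3) by (simp add: algebra_simps)
  qed
qed

lemma sum_mv: fixes f :: "'k \<Rightarrow> real^'p^'p" shows "(\<Sum>j\<in>S. f j) *v v = (\<Sum>j\<in>S. f j *v v)"
  by (induct S rule: infinite_finite_induct) (simp_all add: matrix_vector_mult_add_rdistrib)



lemma mv_sum: fixes A :: "real^'p^'n" shows "A *v (\<Sum>j\<in>S. f j) = (\<Sum>j\<in>S. A *v f j)"
  by (induct S rule: infinite_finite_induct) (simp_all add: matrix_vector_right_distrib)

lemma pointwise:
  fixes X :: "real^'p^'n" and bstar bh :: "real^'p" and e Y :: "real^'n"
    and g g' :: "real \<Rightarrow> real"
    and M P :: "'k::finite \<Rightarrow> real^'p^'p" and q :: "'k \<Rightarrow> real"
    and c lam d a :: "'k \<Rightarrow> real"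
  assumes g_cont: "continuous_on {0..} g"
    and g_deriv: "\<And>x. x > 0 \<Longrightarrow> (g has_real_derivative g' x) (at x)"
    and g'_pos: "\<And>x. x > 0 \<Longrightarrow> g' x > 0"
    and g'_antimono: "\<And>x y. 0 < x \<Longrightarrow> x \<le> y \<Longrightarrow> g' y \<le> g' x"
    and q_ge: "\<And>j. q j \<ge> 1"
    and P_sum: "(\<Sum>j\<in>UNIV. P j ** mp_pinv (M j) ** M j) = mat 1"
    and c_gt: "\<And>j. c j > 1"
    and Y: "Y = X *v bstar + e"
    and d: "d = (\<lambda>j. lq_dual_norm (q j) (transpose (X ** P j ** mp_pinv (M j)) *v e))"
    and a: "a = (\<lambda>j. 2 * (c j - 1) * d j)"
    and dpos: "\<And>j. d j > 0"
    and opt: "\<And>b. pen_obj g X Y M q lam bh \<le> pen_obj g X Y M q lam b"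
    and res: "Y - X *v bh \<noteq> 0"
    and lameq: "\<And>j. lam j / (2 * g' ((norm (Y - X *v bh))\<^sup>2)) = c j * d j"
  shows "loss_L X bstar M q a bh \<le> (1 + Max (range (\<lambda>j. 4 * d j / a j))) * (INF b. loss_L X bstar M q a b)"
proof -
  define K where "K = Max (range (\<lambda>j. 4 * d j / a j))"
  define rh where "rh = (norm (Y - X *v bh))\<^sup>2"
  define G where "G = g' rh"
  have rh: "rh > 0" using res by (simp add: rh_def)
  have G: "G > 0" using g'_pos[OF rh] by (simp add: G_def)
  have apos: "a j > 0" for j using c_gt[of j] dpos[of j] by (simp add: a)
  have Kge: "4 * d j / a j \<le> K" for j unfolding K_def by (rule Max_ge) auto
  have K0: "K \<ge> 0" using Kge[of undefined] dpos[of undefined] apos[of undefined] by (smt (verit) divide_pos_pos)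
  have lamj: "lam j = G * (2 * c j * d j)" for j
    using lameq[of j] G by (simp add: G_def rh_def field_simps)
  define z where "z = (\<lambda>j. transpose (X ** P j ** mp_pinv (M j)) *v e)"
  have dz: "d j = lq_dual_norm (q j) (z j)" for j by (simp add: d z_def)
  have decomp: "inner e (X *v v) = (\<Sum>j\<in>UNIV. inner (z j) (M j *v v))" for v
  proof -
    have "X *v v = X *v ((\<Sum>j\<in>UNIV. P j ** mp_pinv (M j) ** M j) *v v)" by (simp add: P_sum)
    also have "\<dots> = (\<Sum>j\<in>UNIV. (X ** P j ** mp_pinv (M j)) *v (M j *v v))"
      by (simp add: sum_mv matrix_vector_mul_assoc matrix_mul_assoc[symmetric] 
          mv_sum)
    finally show ?thesis by (simp add: inner_sum_right inner_tr z_def)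
  qed
  have key: "loss_L X bstar M q a bh \<le> (1 + K) * loss_L X bstar M q a b" for b
  proof -
    define rb where "rb = (norm (Y - X *v b))\<^sup>2"
    define A where "A = (norm (X *v (bstar - bh)))\<^sup>2"
    define B where "B = (norm (X *v (bstar - b)))\<^sup>2"
    define mh where "mh = (\<lambda>j. lq_norm (q j) (M j *v bh))"
    define m where "m = (\<lambda>j. lq_norm (q j) (M j *v b))"
    have mnn: "m j \<ge> 0" "mh j \<ge> 0" for j by (simp_all add: m_def mh_def lq_norm_nonneg)
    have o: "g rh + (\<Sum>j\<in>UNIV. lam j * mh j) \<le> g rb + (\<Sum>j\<in>UNIV. lam j * m j)"
      using opt[of b] by (simp add: pen_obj_def rh_def rb_def mh_def m_def)
    have t: "g rb \<le> g rh + G * (rb - rh)"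
      unfolding G_def by (rule tangent[OF g_cont g_deriv g'_antimono rh]) (auto simp: rb_def)
    have "G * (rh - rb) \<le> (\<Sum>j\<in>UNIV. lam j * m j) - (\<Sum>j\<in>UNIV. lam j * mh j)"
      using o t by (simp add: algebra_simps)
    also have "\<dots> = G * (\<Sum>j\<in>UNIV. 2 * c j * d j * (m j - mh j))"
      by (simp add: lamj sum_distrib_left sum_subtractf[symmetric] algebra_simps)
    finally have s1: "rh - rb \<le> (\<Sum>j\<in>UNIV. 2 * c j * d j * (m j - mh j))"
      using G by simp
    have Ybh: "Y - X *v bh = e + X *v (bstar - bh)" and Yb: "Y - X *v b = e + X *v (bstar - b)"
      by (simp_all add: Y matrix_vector_mult_diff_distrib)
    have ie: "inner e (X *v (bh - b)) = inner e (X *v (bstar - b)) - inner e (X *v (bstar - bh))"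
      by (simp add: matrix_vector_mult_diff_distrib inner_diff_right)
    have s2: "rh - rb = A - B - 2 * inner e (X *v (bh - b))"
      unfolding rh_def rb_def A_def B_def ie Ybh Yb power2_norm_eq_inner
      by (simp add: inner_add_left inner_add_right inner_commute algebra_simps)
    have s3: "inner e (X *v (bh - b)) \<le> (\<Sum>j\<in>UNIV. d j * (mh j + m j))"
      unfolding decomp
    proof (rule sum_mono)
      fix j
      have "inner (z j) (M j *v (bh - b)) = inner (z j) (M j *v bh) + inner (z j) (- (M j *v b))"
        by (simp add: matrix_vector_mult_diff_distrib inner_diff_right)
      also have "\<dots> \<le> d j * mh j + d j * m j"
        using dual_ineq[OF q_ge[of j], of "z j" "M j *v bh"] dual_ineq[OF q_ge[of j], of "z j" "- (M j *v b)"]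
        by (simp add: dz mh_def m_def lq_norm_uminus)
      finally show "inner (z j) (M j *v (bh - b)) \<le> d j * (mh j + m j)" by (simp add: algebra_simps)
    qed
    have s4: "A + (\<Sum>j\<in>UNIV. a j * mh j) \<le> B + (\<Sum>j\<in>UNIV. (1 + K) * (a j * m j))"
    proof -
      have "A \<le> B + 2 * (\<Sum>j\<in>UNIV. d j * (mh j + m j)) + (\<Sum>j\<in>UNIV. 2 * c j * d j * (m j - mh j))"
        using s1 s2 s3 by linarith
      moreover have "(\<Sum>j\<in>UNIV. a j * mh j) + 2 * (\<Sum>j\<in>UNIV. d j * (mh j + m j)) + (\<Sum>j\<in>UNIV. 2 * c j * d j * (m j - mh j))
          \<le> (\<Sum>j\<in>UNIV. (1 + K) * (a j * m j))"
      proof -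
        have "a j * mh j + 2 * (d j * (mh j + m j)) + 2 * c j * d j * (m j - mh j) \<le> (1 + K) * (a j * m j)" for j
        proof -
          have "4 * d j \<le> K * a j" using Kge[of j] apos[of j] by (simp add: field_simps)
          then have "4 * d j * m j \<le> K * a j * m j" using mnn(1)[of j] by (intro mult_right_mono) auto
          then show ?thesis by (simp add: a algebra_simps)
        qed
        then have "(\<Sum>j\<in>UNIV. a j * mh j + 2 * (d j * (mh j + m j)) + 2 * c j * d j * (m j - mh j)) \<le> (\<Sum>j\<in>UNIV. (1 + K) * (a j * m j))"
          by (rule sum_mono)
        then show ?thesis by (simp add: sum.distrib sum_distrib_left)
      qed
      ultimately show ?thesis by linarith
    qed
    have "0 \<le> K * B" using K0 by (simp add: B_def)
    then have "B \<le> (1 + K) * B" by (simp add: algebra_simps)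
    with s4 have "A + (\<Sum>j\<in>UNIV. a j * mh j) \<le> (1 + K) * (B + (\<Sum>j\<in>UNIV. a j * m j))"
      by (simp add: sum_distrib_left[symmetric] distrib_left)
    then have "(1 / real CARD('n)) * (A + (\<Sum>j\<in>UNIV. a j * mh j)) \<le> (1 / real CARD('n)) * ((1 + K) * (B + (\<Sum>j\<in>UNIV. a j * m j)))"
      by (intro mult_left_mono) auto
    moreover have "loss_L X bstar M q a bh = (1 / real CARD('n)) * (A + (\<Sum>j\<in>UNIV. a j * mh j))"
      by (simp add: loss_L_def A_def mh_def distrib_left)
    moreover have "loss_L X bstar M q a b = (1 / real CARD('n)) * (B + (\<Sum>j\<in>UNIV. a j * m j))"
      by (simp add: loss_L_def B_def m_def distrib_left)
    ultimately show ?thesis by (metis mult.left_commute)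
  qed
  have "loss_L X bstar M q a bh / (1 + K) \<le> (INF b. loss_L X bstar M q a b)"
    by (rule cINF_greatest) (use key K0 in \<open>auto simp: field_simps\<close>)
  then show ?thesis using K0 unfolding K_def[symmetric] by (simp add: field_simps)
qed



theorem mainTheorem8:
  fixes Pr :: "'w measure"
    and X :: "real^'p^'n" and bstar :: "real^'p"
    and eps :: "'w \<Rightarrow> real^'n"
    and g g' :: "real \<Rightarrow> real"
    and M P :: "'k::finite \<Rightarrow> real^'p^'p" and q :: "'k \<Rightarrow> real"
    and c :: "'k \<Rightarrow> real"
    and lam :: "'w \<Rightarrow> 'k \<Rightarrow> real" and bhat :: "'w \<Rightarrow> real^'p"
  assumes prob: "prob_space Pr"
    and eps_rv: "eps \<in> borel_measurable Pr"
    \<comment> \<open>link function\<close>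
    and g0: "g 0 = 0" and g_nonneg: "\<And>x. g x \<ge> 0"
    and g_cont: "continuous_on {0..} g"
    and g_mono: "strict_mono_on {0..} g"
    and g_deriv: "\<And>x. x > 0 \<Longrightarrow> (g has_real_derivative g' x) (at x)"
    and g'_cont: "continuous_on {0<..} g'"
    and g'_pos: "\<And>x. x > 0 \<Longrightarrow> g' x > 0"
    and g'_antimono: "\<And>x y. 0 < x \<Longrightarrow> x \<le> y \<Longrightarrow> g' y \<le> g' x"
    and g_sconv: "strictly_convex (\<lambda>\<alpha>::real^'n. g ((norm \<alpha>)\<^sup>2))"
    \<comment> \<open>penalty\<close>
    and ker: "(\<Inter>j. {v. M j *v v = 0}) = {0}"
    and q_ge: "\<And>j. q j \<ge> 1"
    and P_proj: "\<And>j. P j ** P j = P j"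
    and P_sum: "(\<Sum>j\<in>UNIV. P j ** mp_pinv (M j) ** M j) = mat 1"
    \<comment> \<open>noise assumption\<close>
    and noise: "AE \<omega> in Pr. X *v bstar + eps \<omega> \<noteq> 0 \<and>
        (\<forall>j. lq_dual_norm (q j) (transpose (X ** P j ** mp_pinv (M j)) *v eps \<omega>) > 0)"
    and c_gt: "\<And>j. c j > 1"
  shows "AE \<omega> in Pr.
     (let Y = X *v bstar + eps \<omega>;
          d = (\<lambda>j. lq_dual_norm (q j) (transpose (X ** P j ** mp_pinv (M j)) *v eps \<omega>));
          a = (\<lambda>j. 2 * (c j - 1) * d j)
      in (\<forall>j. lam \<omega> j > 0)
         \<and> (\<forall>b. pen_obj g X Y M q (lam \<omega>) (bhat \<omega>) \<le> pen_obj g X Y M q (lam \<omega>) b)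
         \<and> Y - X *v bhat \<omega> \<noteq> 0
         \<and> (\<forall>j. lam \<omega> j / (2 * g' ((norm (Y - X *v bhat \<omega>))\<^sup>2)) = c j * d j)
         \<longrightarrow> loss_L X bstar M q a (bhat \<omega>)
             \<le> (1 + Max (range (\<lambda>j. 4 * d j / a j)))
                * (INF b. loss_L X bstar M q a b))"
  proof -
  show ?thesis
  proof (rule eventually_mono[OF noise], unfold Let_def, intro impI)
    fix \<omega>
    assume n: "X *v bstar + eps \<omega> \<noteq> 0 \<and>
        (\<forall>j. lq_dual_norm (q j) (transpose (X ** P j ** mp_pinv (M j)) *v eps \<omega>) > 0)"
    assume h: "(\<forall>j. lam \<omega> j > 0)
         \<and> (\<forall>b. pen_obj g X (X *v bstar + eps \<omega>) M q (lam \<omega>) (bhat \<omega>) \<le> pen_obj g X (X *v bstar + eps \<omega>) M q (lam \<omega>) b)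
         \<and> X *v bstar + eps \<omega> - X *v bhat \<omega> \<noteq> 0
         \<and> (\<forall>j. lam \<omega> j / (2 * g' ((norm (X *v bstar + eps \<omega> - X *v bhat \<omega>))\<^sup>2)) = c j * lq_dual_norm (q j) (transpose (X ** P j ** mp_pinv (M j)) *v eps \<omega>))"
    show "loss_L X bstar M q (\<lambda>j. 2 * (c j - 1) * lq_dual_norm (q j) (transpose (X ** P j ** mp_pinv (M j)) *v eps \<omega>)) (bhat \<omega>)
         \<le> (1 + Max (range (\<lambda>j. 4 * lq_dual_norm (q j) (transpose (X ** P j ** mp_pinv (M j)) *v eps \<omega>) /
                (2 * (c j - 1) * lq_dual_norm (q j) (transpose (X ** P j ** mp_pinv (M j)) *v eps \<omega>)))))
           * (INF b. loss_L X bstar M q (\<lambda>j. 2 * (c j - 1) * lq_dual_norm (q j) (transpose (X ** P j ** mp_pinv (M j)) *v eps \<omega>)) b)"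
      by (rule pointwise[OF g_cont g_deriv g'_pos g'_antimono q_ge P_sum c_gt refl refl refl])
         (use n h in auto)
  qed
qed

end
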